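(* Let $G$ be a simple undirected graph of order $n\geq 6$ such that $\rho(G)\geq \rho(K_{2,n-2})$. Then $G$ contains a chorded cycle unless $G\cong K_{2,n-2}$.
   Context: All graphs are finite, simple and undirected. $\rho(G)$ denotes the spectral radius of $G$, i.e. the largest eigenvalue of its adjacency matrix $A(G)=(a_{u,v})$, where $a_{u,v}=1$ if $u,v$ are adjacent and $a_{u,v}=0$ otherwise. $K_{2,n-2}$ is the complete bipartite graph with parts of sizes $2$ and $n-2$. A chord of a cycle $C$ is an edge joining two non-consecutive vertices of $C$. A cycle $C$ in a graph $G$ is chorded if the subgraph of $G$ induced by the vertex set of $C$ contains at least one chord of $C$. *)

theory Defs
  imports Complex_Main
begin

definition simple_graph :: "'a set \<Rightarrow> ('a \<Rightarrow> 'a \<Rightarrow> bool) \<Rightarrow> bool" where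
  "simple_graph V E \<longleftrightarrow> finite V \<and> (\<forall>u v. E u v \<longrightarrow> u \<in> V \<and> v \<in> V)
     \<and> (\<forall>u v. E u v \<longrightarrow> E v u) \<and> (\<forall>v. \<not> E v v)"

definition adj :: "('a \<Rightarrow> 'a \<Rightarrow> bool) \<Rightarrow> 'a \<Rightarrow> 'a \<Rightarrow> real" where
  "adj E u v = (if E u v then 1 else 0)"

definition adj_eigenvalue :: "'a set \<Rightarrow> ('a \<Rightarrow> 'a \<Rightarrow> bool) \<Rightarrow> real \<Rightarrow> bool" where
  "adj_eigenvalue V E lam \<longleftrightarrow> (\<exists>x :: 'a \<Rightarrow> real. (\<exists>v\<in>V. x v \<noteq> 0) \<and>
      (\<forall>u\<in>V. (\<Sum>v\<in>V. adj E u v * x v) = lam * x u))"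

definition spectral_radius :: "'a set \<Rightarrow> ('a \<Rightarrow> 'a \<Rightarrow> bool) \<Rightarrow> real" where
  "spectral_radius V E = Max {lam. adj_eigenvalue V E lam}"

text \<open>The complete bipartite graph K_{2,n-2} on vertex set {0..<n}, parts {0,1}
  and {2..<n}.\<close>
definition K2_edges :: "nat \<Rightarrow> nat \<Rightarrow> nat \<Rightarrow> bool" where
  "K2_edges n u v \<longleftrightarrow> u < n \<and> v < n \<and> ((u < 2 \<and> 2 \<le> v) \<or> (v < 2 \<and> 2 \<le> u))"

definition graph_iso :: "'a set \<Rightarrow> ('a \<Rightarrow> 'a \<Rightarrow> bool) \<Rightarrow> 'b set \<Rightarrow> ('b \<Rightarrow> 'b \<Rightarrow> bool) \<Rightarrow> bool" where
  "graph_iso V E V' E' \<longleftrightarrow> (\<exists>f. bij_betw f V V' \<and> (\<forall>u\<in>V. \<forall>v\<in>V. E u v \<longleftrightarrow> E' (f u) (f v)))"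

definition is_cycle :: "'a set \<Rightarrow> ('a \<Rightarrow> 'a \<Rightarrow> bool) \<Rightarrow> 'a list \<Rightarrow> bool" where
  "is_cycle V E cs \<longleftrightarrow> length cs \<ge> 3 \<and> distinct cs \<and> set cs \<subseteq> V \<and>
     (\<forall>i < length cs. E (cs ! i) (cs ! ((i + 1) mod length cs)))"

definition has_chord :: "('a \<Rightarrow> 'a \<Rightarrow> bool) \<Rightarrow> 'a list \<Rightarrow> bool" where
  "has_chord E cs \<longleftrightarrow> (\<exists>i < length cs. \<exists>j < length cs. i \<noteq> j \<and>
     j \<noteq> (i + 1) mod length cs \<and> i \<noteq> (j + 1) mod length cs \<and> E (cs ! i) (cs ! j))"

definition has_chorded_cycle :: "'a set \<Rightarrow> ('a \<Rightarrow> 'a \<Rightarrow> bool) \<Rightarrow> bool" where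
  "has_chorded_cycle V E \<longleftrightarrow> (\<exists>cs. is_cycle V E cs \<and> has_chord E cs)"

end

theory Submission
  imports Defs "Jordan_Normal_Form.Char_Poly"
begin

lemma eigenvalue_iff_fun:
  fixes A :: "'b::field mat"
  assumes A: "A \<in> carrier_mat n n"
  shows "eigenvalue A k \<longleftrightarrow> (\<exists>p. (\<exists>i<n. p i \<noteq> 0) \<and> (\<forall>i<n. (\<Sum>j<n. A $$ (i,j) * p j) = k * p i))"
proof
  assume "eigenvalue A k"
  then obtain v where v: "v \<in> carrier_vec n" "v \<noteq> 0\<^sub>v n" "A *\<^sub>v v = k \<cdot>\<^sub>v v"
    using A unfolding eigenvalue_def eigenvector_def by auto
  have "\<exists>i<n. v $ i \<noteq> 0"
  proof (rule ccontr)
    assume "\<not> ?thesis"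
    then have "v = 0\<^sub>v n" using v(1) by (intro eq_vecI) auto
    with v(2) show False by simp
  qed
  moreover have "\<forall>i<n. (\<Sum>j<n. A $$ (i,j) * v $ j) = k * v $ i"
  proof (intro allI impI)
    fix i assume i: "i < n"
    have "(A *\<^sub>v v) $ i = (k \<cdot>\<^sub>v v) $ i" using v(3) by simp
    moreover have "(A *\<^sub>v v) $ i = (\<Sum>j<n. A $$ (i,j) * v $ j)"
      using A v(1) i by (simp add: scalar_prod_def lessThan_atLeast0)
    moreover have "(k \<cdot>\<^sub>v v) $ i = k * v $ i" using v(1) i by simp
    ultimately show "(\<Sum>j<n. A $$ (i,j) * v $ j) = k * v $ i" by simp
  qed
  ultimately show "\<exists>p. (\<exists>i<n. p i \<noteq> 0) \<and> (\<forall>i<n. (\<Sum>j<n. A $$ (i,j) * p j) = k * p i)" by blast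
next
  assume "\<exists>p. (\<exists>i<n. p i \<noteq> 0) \<and> (\<forall>i<n. (\<Sum>j<n. A $$ (i,j) * p j) = k * p i)"
  then obtain p where p: "\<exists>i<n. p i \<noteq> 0" "\<forall>i<n. (\<Sum>j<n. A $$ (i,j) * p j) = k * p i" by blast
  let ?v = "vec n p"
  have "?v \<noteq> 0\<^sub>v n" using p(1) by (metis index_vec index_zero_vec(1))
  moreover have "A *\<^sub>v ?v = k \<cdot>\<^sub>v ?v"
    using A p(2) by (intro eq_vecI) (auto simp: scalar_prod_def lessThan_atLeast0)
  ultimately show "eigenvalue A k" using A unfolding eigenvalue_def eigenvector_def
    by (intro exI[of _ ?v]) auto
qed

definition Amat :: "('a \<Rightarrow> 'a \<Rightarrow> bool) \<Rightarrow> (nat \<Rightarrow> 'a) \<Rightarrow> nat \<Rightarrow> real mat" where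
  "Amat E f n = mat n n (\<lambda>(i,j). adj E (f i) (f j))"

lemma Amat_carrier: "Amat E f n \<in> carrier_mat n n" by (simp add: Amat_def)

lemma adj_eig_iff_fun:
  fixes V :: "'a set" and E :: "'a \<Rightarrow> 'a \<Rightarrow> bool" and n :: nat
  assumes f: "bij_betw f {0..<n} V"
  shows "adj_eigenvalue V E k \<longleftrightarrow>
    (\<exists>p. (\<exists>i<n. p i \<noteq> 0) \<and> (\<forall>i<n. (\<Sum>j<n. adj E (f i) (f j) * p j) = k * p i))"
proof
  assume "adj_eigenvalue V E k"
  then obtain x where x: "\<exists>v\<in>V. x v \<noteq> 0" "\<forall>u\<in>V. (\<Sum>v\<in>V. adj E u v * x v) = k * x u"
    unfolding adj_eigenvalue_def by blast
  have sr: "(\<Sum>v\<in>V. g v) = (\<Sum>j<n. g (f j))" for g :: "'a \<Rightarrow> real"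
    using sum.reindex_bij_betw[OF f, of g] by (simp add: atLeast0LessThan comp_def)
  show "\<exists>p. (\<exists>i<n. p i \<noteq> 0) \<and> (\<forall>i<n. (\<Sum>j<n. adj E (f i) (f j) * p j) = k * p i)"
  proof (intro exI[of _ "\<lambda>i. x (f i)"] conjI allI impI)
    from x(1) obtain v where "v \<in> V" "x v \<noteq> 0" by blast
    then obtain i where "i < n" "f i = v" using f by (auto simp: bij_betw_def)
    then show "\<exists>i<n. x (f i) \<noteq> 0" using \<open>x v \<noteq> 0\<close> by blast
  next
    fix i assume "i < n"
    then have "f i \<in> V" using f by (auto simp: bij_betw_def)
    then show "(\<Sum>j<n. adj E (f i) (f j) * x (f j)) = k * x (f i)"
      using x(2) sr[of "\<lambda>v. adj E (f i) v * x v"] by simp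
  qed
next
  assume "\<exists>p. (\<exists>i<n. p i \<noteq> 0) \<and> (\<forall>i<n. (\<Sum>j<n. adj E (f i) (f j) * p j) = k * p i)"
  then obtain p where p: "\<exists>i<n. p i \<noteq> 0" "\<forall>i<n. (\<Sum>j<n. adj E (f i) (f j) * p j) = k * p i" by blast
  define g where "g = the_inv_into {0..<n} f"
  have gf: "g (f i) = i" if "i < n" for i
    using f that unfolding g_def bij_betw_def by (auto intro: the_inv_into_f_f)
  have sr: "(\<Sum>v\<in>V. h v) = (\<Sum>j<n. h (f j))" for h :: "'a \<Rightarrow> real"
    using sum.reindex_bij_betw[OF f, of h] by (simp add: atLeast0LessThan comp_def)
  show "adj_eigenvalue V E k" unfolding adj_eigenvalue_def
  proof (intro exI[of _ "\<lambda>v. p (g v)"] conjI ballI)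
    from p(1) obtain i where "i < n" "p i \<noteq> 0" by blast
    then show "\<exists>v\<in>V. p (g v) \<noteq> 0" using f gf by (intro bexI[of _ "f i"]) (auto simp: bij_betw_def)
  next
    fix u assume "u \<in> V"
    then obtain i where i: "i < n" "u = f i" using f by (auto simp: bij_betw_def)
    have "(\<Sum>v\<in>V. adj E u v * p (g v)) = (\<Sum>j<n. adj E (f i) (f j) * p j)"
      using sr[of "\<lambda>v. adj E u v * p (g v)"] i gf by simp
    also have "\<dots> = k * p i" using p(2) i by simp
    finally show "(\<Sum>v\<in>V. adj E u v * p (g v)) = k * p (g u)" using i gf by simp
  qed
qed

lemma adj_eig_iff_mat:
  fixes n :: nat
  assumes f: "bij_betw f {0..<n} V"
  shows "adj_eigenvalue V E k \<longleftrightarrow> eigenvalue (Amat E f n) k"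
  unfolding adj_eig_iff_fun[OF f] eigenvalue_iff_fun[OF Amat_carrier]
  by (simp add: Amat_def)

lemma finite_adj_eig:
  assumes "finite V"
  shows "finite {k. adj_eigenvalue V E k}"
proof -
  obtain f where f: "bij_betw f {0..<card V} V" using ex_bij_betw_nat_finite[OF assms] by blast
  let ?A = "Amat E f (card V)"
  have "char_poly ?A \<noteq> 0" using degree_monic_char_poly[OF Amat_carrier, of E f "card V"] by auto
  then have "finite {k. poly (char_poly ?A) k = 0}" by (rule poly_roots_finite)
  moreover have "{k. adj_eigenvalue V E k} \<subseteq> {k. poly (char_poly ?A) k = 0}"
  proof
    fix k assume "k \<in> {k. adj_eigenvalue V E k}"
    then have "eigenvalue ?A k" using adj_eig_iff_mat[OF f] by auto
    then show "k \<in> {k. poly (char_poly ?A) k = 0}"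
      using eigenvalue_root_char_poly[OF Amat_carrier] by auto
  qed
  ultimately show ?thesis by (rule finite_subset[rotated])
qed


lemma adj_sym_real:
  assumes "simple_graph V E"
  shows "adj E u v = adj E v u"
  using assms unfolding simple_graph_def adj_def by auto

lemma adj_eig_exists:
  fixes V :: "'a set"
  assumes G: "simple_graph V E" and ne: "V \<noteq> {}"
  shows "\<exists>k. adj_eigenvalue V E k"
proof -
  have finV: "finite V" using G unfolding simple_graph_def by auto
  define n where "n = card V"
  have n1: "n \<ge> 1" using finV ne n_def by (simp add: Suc_leI card_gt_0_iff)
  obtain f where f: "bij_betw f {0..<n} V" using ex_bij_betw_nat_finite[OF finV] n_def by blast
  define a where "a i j = adj E (f i) (f j)" for i j
  have asym: "a i j = a j i" for i j using adj_sym_real[OF G] a_def by simp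
  define Ac where "Ac = map_mat complex_of_real (Amat E f n)"
  have Ac: "Ac \<in> carrier_mat n n" using Amat_carrier Ac_def by auto
  have Acij: "Ac $$ (i,j) = complex_of_real (a i j)" if "i < n" "j < n" for i j
    using that by (simp add: Ac_def Amat_def a_def)
  obtain as where as: "char_poly Ac = (\<Prod>a\<leftarrow>as. [:- a, 1:])" "length as = n"
    using char_poly_factorized[OF Ac] by blast
  define mu where "mu = as ! 0"
  have "mu \<in> set as" using as(2) n1 mu_def by auto
  then have "poly (char_poly Ac) mu = 0" unfolding as(1)
    by (induction as) (auto)
  then have "eigenvalue Ac mu" using eigenvalue_root_char_poly[OF Ac] by simp
  then obtain z where z: "\<exists>i<n. z i \<noteq> 0" "\<forall>i<n. (\<Sum>j<n. Ac $$ (i,j) * z j) = mu * z i"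
    using eigenvalue_iff_fun[OF Ac] by blast
  have zeq: "(\<Sum>j<n. complex_of_real (a i j) * z j) = mu * z i" if "i < n" for i
    using z(2) that Acij by simp
  define Q where "Q = (\<Sum>i<n. cnj (z i) * (\<Sum>j<n. complex_of_real (a i j) * z j))"
  define s where "s = (\<Sum>i<n. cnj (z i) * z i)"
  have "Q = (\<Sum>i<n. cnj (z i) * (mu * z i))" unfolding Q_def
    by (rule sum.cong) (auto simp: zeq)
  then have Q1: "Q = mu * s" unfolding s_def
    by (simp add: sum_distrib_left mult.commute mult.left_commute)
  have "cnj Q = (\<Sum>i<n. z i * (\<Sum>j<n. complex_of_real (a i j) * cnj (z j)))"
    unfolding Q_def by (simp add: cnj_sum)
  also have "\<dots> = (\<Sum>i<n. \<Sum>j<n. complex_of_real (a i j) * z i * cnj (z j))"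
    by (simp add: sum_distrib_left mult.commute mult.left_commute)
  also have "\<dots> = (\<Sum>j<n. \<Sum>i<n. complex_of_real (a i j) * z i * cnj (z j))"
    by (rule sum.swap)
  also have "\<dots> = Q" unfolding Q_def
    by (simp add: sum_distrib_left mult.commute mult.left_commute asym)
  finally have Qr: "cnj Q = Q" .
  have s_real: "s = complex_of_real (\<Sum>i<n. (cmod (z i))\<^sup>2)"
    unfolding s_def of_real_sum by (rule sum.cong[OF refl], subst complex_norm_square, rule mult.commute)
  have "(\<Sum>i<n. (cmod (z i))\<^sup>2) > 0"
  proof -
    from z(1) obtain i where "i < n" "z i \<noteq> 0" by blast
    then have "(cmod (z i))\<^sup>2 > 0" by simp
    moreover have "(cmod (z i))\<^sup>2 \<le> (\<Sum>i<n. (cmod (z i))\<^sup>2)"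
      using \<open>i < n\<close> by (intro member_le_sum) auto
    ultimately show ?thesis by linarith
  qed
  then have "s \<noteq> 0" unfolding s_real by (metis less_irrefl of_real_eq_0_iff)
  have "cnj mu * s = mu * s" using Qr Q1 s_real by (metis complex_cnj_complex_of_real complex_cnj_mult)
  then have cm: "cnj mu = mu" using \<open>s \<noteq> 0\<close> by simp
  have "- Im mu = Im mu" using arg_cong[OF cm, of Im] by simp
  then have imz: "Im mu = 0" by simp
  define l where "l = Re mu"
  have mul: "mu = complex_of_real l" using imz l_def by (simp add: complex_eq_iff)
  have re: "(\<Sum>j<n. a i j * Re (z j)) = l * Re (z i)" if "i < n" for i
  proof -
    have "Re (\<Sum>j<n. complex_of_real (a i j) * z j) = Re (mu * z i)" using zeq[OF that] by simp
    then show ?thesis by (simp add: mul Re_sum)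
  qed
  have im: "(\<Sum>j<n. a i j * Im (z j)) = l * Im (z i)" if "i < n" for i
  proof -
    have "Im (\<Sum>j<n. complex_of_real (a i j) * z j) = Im (mu * z i)" using zeq[OF that] by simp
    then show ?thesis by (simp add: mul Im_sum)
  qed
  show ?thesis
  proof (cases "\<exists>i<n. Re (z i) \<noteq> 0")
    case True
    have "\<exists>p. (\<exists>i<n. p i \<noteq> 0) \<and> (\<forall>i<n. (\<Sum>j<n. adj E (f i) (f j) * p j) = l * p i)"
      by (rule exI[of _ "\<lambda>j. Re (z j)"]) (use True re in \<open>simp add: a_def\<close>)
    then have "adj_eigenvalue V E l" by (subst adj_eig_iff_fun[OF f])
    then show ?thesis by blast
  next
    case False
    then have ex: "\<exists>i<n. Im (z i) \<noteq> 0" using z(1) by (auto simp: complex_eq_iff)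
    have "\<exists>p. (\<exists>i<n. p i \<noteq> 0) \<and> (\<forall>i<n. (\<Sum>j<n. adj E (f i) (f j) * p j) = l * p i)"
      by (rule exI[of _ "\<lambda>j. Im (z j)"]) (use ex im in \<open>simp add: a_def\<close>)
    then have "adj_eigenvalue V E l" by (subst adj_eig_iff_fun[OF f])
    then show ?thesis by blast
  qed
qed


lemma less4: "i < (4::nat) \<longleftrightarrow> i = 0 \<or> i = 1 \<or> i = 2 \<or> i = 3" by auto
lemma less5: "i < (5::nat) \<longleftrightarrow> i = 0 \<or> i = 1 \<or> i = 2 \<or> i = 3 \<or> i = 4" by auto
lemma less6: "i < (6::nat) \<longleftrightarrow> i = 0 \<or> i = 1 \<or> i = 2 \<or> i = 3 \<or> i = 4 \<or> i = 5" by auto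

lemma chord4:
  assumes "distinct [a,b,c,d]" "{a,b,c,d} \<subseteq> V" "E a b" "E b c" "E c d" "E d a" "E a c"
  shows "has_chorded_cycle V E"
  unfolding has_chorded_cycle_def
proof (intro exI[of _ "[a,b,c,d]"] conjI)
  show "is_cycle V E [a,b,c,d]" unfolding is_cycle_def using assms
    by (auto simp: less_Suc_eq)
  show "has_chord E [a,b,c,d]" unfolding has_chord_def using assms
    by (intro exI[of _ 0] conjI exI[of _ 2]) auto
qed

lemma chord5:
  assumes "distinct [a,b,c,d,e]" "{a,b,c,d,e} \<subseteq> V" "E a b" "E b c" "E c d" "E d e" "E e a" "E a c"
  shows "has_chorded_cycle V E"
  unfolding has_chorded_cycle_def
proof (intro exI[of _ "[a,b,c,d,e]"] conjI)
  show "is_cycle V E [a,b,c,d,e]" unfolding is_cycle_def using assms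
    by (auto simp: less_Suc_eq)
  show "has_chord E [a,b,c,d,e]" unfolding has_chord_def using assms
    by (intro exI[of _ 0] conjI exI[of _ 2]) auto
qed

lemma chord6:
  assumes "distinct [a,b,c,d,e,f]" "{a,b,c,d,e,f} \<subseteq> V" "E a b" "E b c" "E c d" "E d e" "E e f" "E f a" "E a d"
  shows "has_chorded_cycle V E"
  unfolding has_chorded_cycle_def
proof (intro exI[of _ "[a,b,c,d,e,f]"] conjI)
  show "is_cycle V E [a,b,c,d,e,f]" unfolding is_cycle_def using assms
    by (auto simp: less_Suc_eq)
  show "has_chord E [a,b,c,d,e,f]" unfolding has_chord_def using assms
    by (intro exI[of _ 0] conjI exI[of _ 3]) auto
qed


lemma iso_K2:
  fixes V :: "'a set" and n :: nat
  assumes V: "V = {a,b} \<union> R" and ab: "a \<noteq> b" "a \<notin> R" "b \<notin> R"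
    and R: "finite R" "card R + 2 = n"
    and Eiff: "\<And>x y. x \<in> V \<Longrightarrow> y \<in> V \<Longrightarrow> E x y \<longleftrightarrow> ((x \<in> {a,b} \<and> y \<in> R) \<or> (x \<in> R \<and> y \<in> {a,b}))"
  shows "graph_iso V E {0..<n} (K2_edges n)"
proof -
  obtain g where g: "bij_betw g R {0..<card R}" using ex_bij_betw_finite_nat[OF R(1)] by blast
  define f where "f x = (if x = a then 0 else if x = b then 1 else g x + 2)" for x
  have fR: "f x = g x + 2" if "x \<in> R" for x using that ab f_def by auto
  have fa: "f a = 0" and fb: "f b = 1" using ab f_def by auto
  have gR: "g x < card R" if "x \<in> R" for x using g that by (auto simp: bij_betw_def)
  have "inj_on f V"
  proof (rule inj_onI)
    fix x y assume xy: "x \<in> V" "y \<in> V" "f x = f y"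
    show "x = y"
    proof (cases "x \<in> R \<and> y \<in> R")
      case True
      then have "g x = g y" using xy fR by simp
      then show ?thesis using True g by (auto simp: bij_betw_def inj_on_def)
    next
      case False
      then show ?thesis using xy V fR fa fb ab by auto
    qed
  qed
  moreover have "f ` V = {0..<n}"
  proof
    show "f ` V \<subseteq> {0..<n}" using V fR fa fb gR R(2) by auto
    show "{0..<n} \<subseteq> f ` V"
    proof
      fix i assume i: "i \<in> {0..<n}"
      show "i \<in> f ` V"
      proof (cases "i < 2")
        case True
        then have "i = 0 \<or> i = 1" by auto
        then show ?thesis using V fa fb by (metis Un_iff image_eqI insertCI)
      next
        case False
        then have "i - 2 \<in> {0..<card R}" using i R(2) by auto
        then have "i - 2 \<in> g ` R" using g by (simp add: bij_betw_def)
        then obtain x where "x \<in> R" "g x = i - 2" by auto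
        then have "f x = i" using fR False by auto
        then show ?thesis using \<open>x \<in> R\<close> V by auto
      qed
    qed
  qed
  ultimately have bij: "bij_betw f V {0..<n}" by (simp add: bij_betw_def)
  have fV: "f x < n" if "x \<in> V" for x using \<open>f ` V = {0..<n}\<close> that by auto
  have f2: "f x < 2 \<longleftrightarrow> x \<in> {a,b}" if "x \<in> V" for x
    using that V fR fa fb by auto
  have "\<forall>u\<in>V. \<forall>v\<in>V. E u v \<longleftrightarrow> K2_edges n (f u) (f v)"
  proof (intro ballI)
    fix u v assume uv: "u \<in> V" "v \<in> V"
    have Ru: "u \<in> R \<longleftrightarrow> u \<notin> {a,b}" using uv V ab by auto
    have Rv: "v \<in> R \<longleftrightarrow> v \<notin> {a,b}" using uv V ab by auto
    show "E u v \<longleftrightarrow> K2_edges n (f u) (f v)"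
      unfolding K2_edges_def Eiff[OF uv] using fV[OF uv(1)] fV[OF uv(2)] f2[OF uv(1)] f2[OF uv(2)] Ru Rv
      by (auto simp: not_less)
  qed
  then show ?thesis unfolding graph_iso_def using bij by blast
qed

lemma K2_simple: "simple_graph {0..<n} (K2_edges n)"
  unfolding simple_graph_def K2_edges_def by auto

lemma K2_eig:
  fixes n :: nat
  assumes n: "n \<ge> 3"
  shows "adj_eigenvalue {0..<n} (K2_edges n) (sqrt (2 * real n - 4))"
proof -
  define r where "r = sqrt (2 * real n - 4)"
  have rr: "r * r = 2 * real n - 4" using n r_def by (simp add: real_sqrt_mult_self)
  define x where "x i = (if i < 2 then r / 2 else 1)" for i :: nat
  have split: "{0..<n} = {0,1} \<union> {2..<n}" using n by auto
  show ?thesis unfolding adj_eigenvalue_def r_def[symmetric]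
  proof (intro exI[of _ x] conjI ballI)
    show "\<exists>v\<in>{0..<n}. x v \<noteq> 0" using n by (intro bexI[of _ 2]) (auto simp: x_def)
  next
    fix u assume u: "u \<in> {0..<n}"
    show "(\<Sum>v\<in>{0..<n}. adj (K2_edges n) u v * x v) = r * x u"
    proof (cases "u < 2")
      case True
      have "(\<Sum>v\<in>{0..<n}. adj (K2_edges n) u v * x v) = (\<Sum>v\<in>{0,1}. adj (K2_edges n) u v * x v) + (\<Sum>v\<in>{2..<n}. adj (K2_edges n) u v * x v)"
        unfolding split by (rule sum.union_disjoint) auto
      also have "(\<Sum>v\<in>{0,1}. adj (K2_edges n) u v * x v) = 0" using True by (auto simp: adj_def K2_edges_def)
      also have "(\<Sum>v\<in>{2..<n}. adj (K2_edges n) u v * x v) = (\<Sum>v\<in>{2..<n}. 1)"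
        using True u by (intro sum.cong) (auto simp: adj_def K2_edges_def x_def)
      also have "\<dots> = real n - 2" using n by simp
      finally show ?thesis using True rr by (simp add: x_def)
    next
      case False
      have "(\<Sum>v\<in>{0..<n}. adj (K2_edges n) u v * x v) = (\<Sum>v\<in>{0,1}. adj (K2_edges n) u v * x v) + (\<Sum>v\<in>{2..<n}. adj (K2_edges n) u v * x v)"
        unfolding split by (rule sum.union_disjoint) auto
      also have "(\<Sum>v\<in>{0,1}. adj (K2_edges n) u v * x v) = r" using False u n by (auto simp: adj_def K2_edges_def x_def)
      also have "(\<Sum>v\<in>{2..<n}. adj (K2_edges n) u v * x v) = 0"
        using False u by (intro sum.neutral) (auto simp: adj_def K2_edges_def x_def)
      finally show ?thesis using False by (simp add: x_def)
    qed
  qed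
qed


lemma CL:
  fixes W :: "'a set" and U :: "'b set" and Nw :: "'a \<Rightarrow> 'b set"
  assumes fin: "finite W" "finite U"
    and F2: "\<And>w. w \<in> W \<Longrightarrow> card (Nw w) \<ge> 2 \<Longrightarrow> Nw w \<subseteq> U"
    and F3: "\<And>w w'. w \<in> W \<Longrightarrow> w' \<in> W \<Longrightarrow> w \<noteq> w' \<Longrightarrow> card (Nw w) \<ge> 3 \<Longrightarrow> card (Nw w') \<ge> 2
               \<Longrightarrow> Nw w \<inter> Nw w' = {}"
    and ex: "\<exists>w\<in>W. card (Nw w) \<ge> 2"
  shows "(\<Sum>w\<in>W. card (Nw w)) + 2 + card {w\<in>W. card (Nw w) \<le> 1} \<le> 2 * card W + card U"
    and "\<forall>w\<in>W. card (Nw w) \<ge> 2 \<Longrightarrow> (\<Sum>w\<in>W. card (Nw w)) + 2 = 2 * card W + card U \<Longrightarrow> \<forall>w\<in>W. Nw w = U"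
proof -
  define c where "c w = card (Nw w)" for w
  define B3 where "B3 = {w\<in>W. c w \<ge> 3}"
  define B2 where "B2 = {w\<in>W. c w = 2}"
  define B01 where "B01 = {w\<in>W. c w \<le> 1}"
  have finB: "finite B3" "finite B2" "finite B01" using fin by (auto simp: B3_def B2_def B01_def)
  have Wsplit: "W = B01 \<union> B2 \<union> B3" by (auto simp: B3_def B2_def B01_def c_def)
  have sumW: "(\<Sum>w\<in>W. c w) = (\<Sum>w\<in>B01. c w) + (\<Sum>w\<in>B2. c w) + (\<Sum>w\<in>B3. c w)"
  proof -
    have "(\<Sum>w\<in>B01 \<union> B2 \<union> B3. c w) = (\<Sum>w\<in>B01 \<union> B2. c w) + (\<Sum>w\<in>B3. c w)"
      using finB by (intro sum.union_disjoint) (auto simp: B3_def B2_def B01_def)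
    moreover have "(\<Sum>w\<in>B01 \<union> B2. c w) = (\<Sum>w\<in>B01. c w) + (\<Sum>w\<in>B2. c w)"
      using finB by (intro sum.union_disjoint) (auto simp: B3_def B2_def B01_def)
    ultimately show ?thesis using Wsplit by simp
  qed
  have cardW: "card W = card B01 + card B2 + card B3"
  proof -
    have "card (B01 \<union> B2 \<union> B3) = card (B01 \<union> B2) + card B3"
      using finB by (intro card_Un_disjoint) (auto simp: B3_def B2_def B01_def)
    moreover have "card (B01 \<union> B2) = card B01 + card B2"
      using finB by (intro card_Un_disjoint) (auto simp: B3_def B2_def B01_def)
    ultimately show ?thesis using Wsplit by simp
  qed
  have s01: "(\<Sum>w\<in>B01. c w) \<le> card B01"
    using sum_mono[of B01 c "\<lambda>_. 1"] by (auto simp: B01_def)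
  have s2: "(\<Sum>w\<in>B2. c w) = 2 * card B2" by (simp add: B2_def)
  define D3 where "D3 = (\<Union>w\<in>B3. Nw w)"
  define D2 where "D2 = (\<Union>w\<in>B2. Nw w)"
  have D3U: "D3 \<subseteq> U"
  proof
    fix x assume "x \<in> D3"
    then obtain w where "w \<in> W" "card (Nw w) \<ge> 3" "x \<in> Nw w" by (auto simp: D3_def B3_def c_def)
    then show "x \<in> U" using F2[of w] by auto
  qed
  have D2U: "D2 \<subseteq> U"
  proof
    fix x assume "x \<in> D2"
    then obtain w where "w \<in> W" "card (Nw w) = 2" "x \<in> Nw w" by (auto simp: D2_def B2_def c_def)
    then show "x \<in> U" using F2[of w] by auto
  qed
  have finN: "finite (Nw w)" if "w \<in> B3 \<union> B2" for w
    using that by (auto simp: B3_def B2_def c_def intro: card_ge_0_finite)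
  have cardD3: "card D3 = (\<Sum>w\<in>B3. c w)"
    unfolding D3_def c_def
  proof (rule card_UN_disjoint)
    show "finite B3" by fact
    show "\<forall>i\<in>B3. finite (Nw i)" using finN by auto
    show "\<forall>i\<in>B3. \<forall>j\<in>B3. i \<noteq> j \<longrightarrow> Nw i \<inter> Nw j = {}"
      using F3 by (auto simp: B3_def c_def)
  qed
  have D32: "D3 \<inter> D2 = {}"
    using F3 by (fastforce simp: D3_def D2_def B3_def B2_def c_def)
  have finD: "finite D3" "finite D2" using D3U D2U fin finite_subset by auto
  have D32U: "card D3 + card D2 \<le> card U"
    using card_Un_disjoint[OF finD D32] card_mono[OF fin(2), of "D3 \<union> D2"] D3U D2U by auto
  have D2ge: "card D2 \<ge> 2" if "B2 \<noteq> {}"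
  proof -
    from that obtain w where w: "w \<in> B2" by auto
    then have "Nw w \<subseteq> D2" by (auto simp: D2_def)
    then have "card (Nw w) \<le> card D2" using finD by (simp add: card_mono)
    then show ?thesis using w by (auto simp: B2_def c_def)
  qed
  have ex': "B3 \<noteq> {} \<or> B2 \<noteq> {}"
  proof -
    obtain w where "w \<in> W" "c w \<ge> 2" using ex c_def by auto
    then have "w \<in> B3 \<or> w \<in> B2" by (auto simp: B3_def B2_def)
    then show ?thesis by auto
  qed
  show "(\<Sum>w\<in>W. card (Nw w)) + 2 + card {w\<in>W. card (Nw w) \<le> 1} \<le> 2 * card W + card U"
  proof -
    have "card D3 + 2 \<le> 2 * card B3 + card U"
    proof (cases "B3 = {}")
      case True
      then show ?thesis using ex' D2ge D32U by auto
    next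
      case False
      then have "card B3 \<ge> 1" using finB by (simp add: Suc_leI card_gt_0_iff)
      then show ?thesis using D32U by auto
    qed
    then show ?thesis using sumW cardW s01 s2 cardD3 unfolding c_def B01_def by linarith
  qed
  assume all2: "\<forall>w\<in>W. card (Nw w) \<ge> 2"
    and eq: "(\<Sum>w\<in>W. card (Nw w)) + 2 = 2 * card W + card U"
  have B01e: "B01 = {}" using all2 by (auto simp: B01_def c_def)
  then have eq2: "card D3 + 2 = 2 * card B3 + card U"
    using eq sumW cardW s2 cardD3 unfolding c_def by simp
  show "\<forall>w\<in>W. Nw w = U"
  proof (cases "B3 = {}")
    case True
    then have "card U = 2" using eq2 by (simp add: D3_def)
    moreover have "W = B2" using Wsplit B01e True by auto
    ultimately show ?thesis using F2 fin
      by (metis (mono_tags, lifting) B2_def c_def card_subset_eq mem_Collect_eq order_refl)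
  next
    case False
    then have "card B3 \<ge> 1" using finB by (simp add: Suc_leI card_gt_0_iff)
    then have "card B3 = 1" "card D2 = 0" using eq2 D32U by auto
    then have "B2 = {}" using D2ge by force
    obtain w0 where B3e: "B3 = {w0}" using \<open>card B3 = 1\<close> card_1_singletonE by blast
    then have W: "W = {w0}" using Wsplit B01e \<open>B2 = {}\<close> by auto
    have "D3 = Nw w0" using B3e by (simp add: D3_def)
    then have "card (Nw w0) = card U" "Nw w0 \<subseteq> U" using eq2 \<open>card B3 = 1\<close> D3U by auto
    then have "Nw w0 = U" using fin card_subset_eq by blast
    then show ?thesis using W by auto
  qed
qed


lemma sg_sym: "simple_graph V E \<Longrightarrow> E u w \<Longrightarrow> E w u" unfolding simple_graph_def by blast
lemma sg_irr: "simple_graph V E \<Longrightarrow> \<not> E u u" unfolding simple_graph_def by blast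
lemma sg_in: "simple_graph V E \<Longrightarrow> E u w \<Longrightarrow> u \<in> V \<and> w \<in> V" unfolding simple_graph_def by blast

lemma F1:
  assumes G: "simple_graph V E" and nc: "\<not> has_chorded_cycle V E"
    and "E v u" "E v a" "E v b" "E u a" "E u b"
  shows "a = b"
proof (rule ccontr)
  assume "a \<noteq> b"
  have "v \<noteq> a" "v \<noteq> u" "v \<noteq> b" "a \<noteq> u" "u \<noteq> b" using assms sg_irr[OF G] by metis+
  then have "has_chorded_cycle V E"
    using assms \<open>a \<noteq> b\<close> sg_sym[OF G] sg_in[OF G]
    by (intro chord4[of v a u b]) auto
  with nc show False by blast
qed

lemma F2:
  assumes G: "simple_graph V E" and nc: "\<not> has_chorded_cycle V E"
    and "w \<noteq> v" "\<not> E v w" "u1 \<noteq> u2" "E v u1" "E v u2" "E w u1" "E w u2" "E v z" "E u1 z"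
  shows False
proof (cases "z = u2")
  case True
  have "u1 \<noteq> w" "u1 \<noteq> v" "w \<noteq> u2" "w \<noteq> v" "u2 \<noteq> v" using assms sg_irr[OF G] by metis+
  then have "has_chorded_cycle V E"
    using assms True sg_sym[OF G] sg_in[OF G]
    by (intro chord4[of u1 w u2 v]) auto
  with nc show False by blast
next
  case False
  have "v \<noteq> z" "v \<noteq> u1" "v \<noteq> w" "v \<noteq> u2" "z \<noteq> u1" "z \<noteq> w" "u1 \<noteq> w" "w \<noteq> u2"
    using assms sg_irr[OF G] by metis+
  then have "has_chorded_cycle V E"
    using assms False sg_sym[OF G] sg_in[OF G]
    by (intro chord5[of v z u1 w u2]) auto
  with nc show False by blast
qed

lemma F3:
  assumes G: "simple_graph V E" and nc: "\<not> has_chorded_cycle V E"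
    and "w \<noteq> v" "\<not> E v w" "w' \<noteq> v" "\<not> E v w'" "w \<noteq> w'"
    and "E v u" "E v a" "E v b" "a \<noteq> b" "a \<noteq> u" "b \<noteq> u"
    and "E w u" "E w' u" "E w a" "E w' b"
  shows False
proof -
  have "v \<noteq> a" "v \<noteq> u" "v \<noteq> b" "a \<noteq> w" "u \<noteq> w" "u \<noteq> w'" "b \<noteq> w" "b \<noteq> w'" "a \<noteq> w'"
    using assms sg_irr[OF G] by metis+
  then have "has_chorded_cycle V E"
    using assms sg_sym[OF G] sg_in[OF G]
    by (intro chord6[of v a w u w' b]) auto
  with nc show False by blast
qed

lemma Windep:
  assumes G: "simple_graph V E" and nc: "\<not> has_chorded_cycle V E"
    and "w1 \<noteq> w2" "a \<noteq> b" "E w1 a" "E w1 b" "E w2 a" "E w2 b" "E w1 w2"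
  shows False
proof -
  have "w1 \<noteq> a" "w1 \<noteq> b" "w2 \<noteq> a" "w2 \<noteq> b" using assms sg_irr[OF G] by metis+
  then have "has_chorded_cycle V E"
    using assms sg_sym[OF G] sg_in[OF G]
    by (intro chord4[of w1 a w2 b]) auto
  with nc show False by blast
qed


lemma adj_sum_card:
  assumes "finite A"
  shows "(\<Sum>w\<in>A. adj E u w) = real (card {w\<in>A. E u w})"
proof -
  have "(\<Sum>w\<in>A. adj E u w) = (\<Sum>w\<in>A. if E u w then 1 else 0)" by (simp add: adj_def)
  also have "\<dots> = (\<Sum>w\<in>{w\<in>A. E u w}. 1)" using sum.inter_filter[OF assms, of "\<lambda>_. 1::real" "\<lambda>w. E u w"] by simp
  finally show ?thesis by simp
qed

lemma adj_sum_le: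
  assumes "finite A" "\<And>w. w \<in> A \<Longrightarrow> y w \<le> 1"
  shows "(\<Sum>w\<in>A. adj E u w * y w) \<le> real (card {w\<in>A. E u w})"
proof -
  have "(\<Sum>w\<in>A. adj E u w * y w) \<le> (\<Sum>w\<in>A. adj E u w)"
    using assms by (intro sum_mono) (auto simp: adj_def)
  then show ?thesis using adj_sum_card[OF assms(1)] by simp
qed

lemma adj_sum_ge:
  assumes "finite A" "\<And>w. w \<in> A \<Longrightarrow> y w \<ge> -1"
  shows "(\<Sum>w\<in>A. adj E u w * y w) \<ge> - real (card {w\<in>A. E u w})"
proof -
  have "(\<Sum>w\<in>A. - adj E u w) \<le> (\<Sum>w\<in>A. adj E u w * y w)"
    using assms by (intro sum_mono) (auto simp: adj_def)
  then show ?thesis using adj_sum_card[OF assms(1), of E u] by (simp add: sum_negf)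
qed

lemma adj_sum_zero:
  assumes "finite A" "card {w\<in>A. E u w} = 0"
  shows "(\<Sum>w\<in>A. adj E u w * y w) = 0"
proof -
  have "{w\<in>A. E u w} = {}" using assms by auto
  then show ?thesis by (intro sum.neutral) (auto simp: adj_def)
qed

lemma main_bound:
  fixes V :: "'a set" and E :: "'a \<Rightarrow> 'a \<Rightarrow> bool" and n :: nat and l :: real
  assumes G: "simple_graph V E" and cardV: "card V = n" and n6: "n \<ge> 6"
    and nc: "\<not> has_chorded_cycle V E"
    and niso: "\<not> graph_iso V E {0..<n} (K2_edges n)"
    and eig: "adj_eigenvalue V E l"
  shows "l < sqrt (2 * real n - 4)"
proof (rule ccontr)
  define r where "r = sqrt (2 * real n - 4)"
  assume "\<not> l < sqrt (2 * real n - 4)"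
  then have lr: "r \<le> l" using r_def by simp
  have rr: "r * r = 2 * real n - 4" using n6 r_def by (simp add: real_sqrt_mult_self)
  have "sqrt 4 < r" unfolding r_def using n6 by (intro real_sqrt_less_mono) simp
  then have r2: "r > 2" by simp
  then have l2: "l > 2" using lr by simp
  have ll: "l * l \<ge> 2 * real n - 4" using rr lr r2 mult_mono[OF lr lr] by simp
  have finV: "finite V" using G unfolding simple_graph_def by blast
  obtain x where x: "\<exists>v\<in>V. x v \<noteq> 0" "\<forall>u\<in>V. (\<Sum>w\<in>V. adj E u w * x w) = l * x u"
    using eig unfolding adj_eigenvalue_def by blast
  have Vne: "V \<noteq> {}" using x(1) by blast
  define m where "m = Max ((\<lambda>u. \<bar>x u\<bar>) ` V)"
  have "m \<in> (\<lambda>u. \<bar>x u\<bar>) ` V" unfolding m_def using finV Vne by (intro Max_in) auto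
  then obtain v where vV: "v \<in> V" and vm: "\<bar>x v\<bar> = m" by auto
  have vmax: "\<bar>x u\<bar> \<le> \<bar>x v\<bar>" if "u \<in> V" for u
    unfolding vm m_def using finV that by (intro Max_ge) auto
  have xv: "x v \<noteq> 0" using x(1) vmax by fastforce
  define y where "y u = x u / x v" for u
  have yv: "y v = 1" using xv y_def by simp
  have ybd: "\<bar>y u\<bar> \<le> 1" if "u \<in> V" for u
    using vmax[OF that] xv by (simp add: y_def abs_divide divide_le_eq_1)
  have yle: "y u \<le> 1" and yge: "y u \<ge> -1" if "u \<in> V" for u using ybd[OF that] by auto
  have yeq: "(\<Sum>w\<in>V. adj E u w * y w) = l * y u" if "u \<in> V" for u
  proof -
    have "(\<Sum>w\<in>V. adj E u w * y w) = (\<Sum>w\<in>V. adj E u w * x w) / x v"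
      by (simp add: y_def sum_divide_distrib)
    also have "\<dots> = l * y u" using x(2) that by (simp add: y_def)
    finally show ?thesis .
  qed
  define N where "N = {u\<in>V. E v u}"
  define W where "W = {w\<in>V. w \<noteq> v \<and> \<not> E v w}"
  define c where "c w = card {u\<in>N. E w u}" for w
  have irr: "\<And>u. \<not> E u u" and sym: "\<And>u w. E u w \<Longrightarrow> E w u" and inV: "\<And>u w. E u w \<Longrightarrow> u \<in> V \<and> w \<in> V"
    using G unfolding simple_graph_def by blast+
  have Vsplit: "V = insert v (N \<union> W)" using vV by (auto simp: N_def W_def)
  have vN: "v \<notin> N" using irr by (auto simp: N_def)
  have vW: "v \<notin> W" by (auto simp: W_def)
  have NW: "N \<inter> W = {}" by (auto simp: N_def W_def)
  have finN: "finite N" and finW: "finite W" using finV by (auto simp: N_def W_def)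
  have NV: "N \<subseteq> V" and WV: "W \<subseteq> V" by (auto simp: N_def W_def)
  have ncard: "n = 1 + card N + card W"
    using cardV Vsplit vN vW NW finN finW by (simp add: card_Un_disjoint)
  have sumsplit: "(\<Sum>w\<in>V. g w) = g v + (\<Sum>w\<in>N. g w) + (\<Sum>w\<in>W. g w)" for g :: "'a \<Rightarrow> real"
  proof -
    have "(\<Sum>w\<in>V. g w) = g v + (\<Sum>w\<in>N \<union> W. g w)"
      using Vsplit vN vW finN finW by (simp add: sum.insert)
    also have "(\<Sum>w\<in>N \<union> W. g w) = (\<Sum>w\<in>N. g w) + (\<Sum>w\<in>W. g w)"
      using finN finW NW by (simp add: sum.union_disjoint)
    finally show ?thesis by simp
  qed
  have cw: "(\<Sum>u\<in>V. adj E v u * adj E u w) = real (c w)" for w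
  proof -
    have "(\<Sum>u\<in>V. adj E v u * adj E u w) = (\<Sum>u\<in>V. if E v u \<and> E w u then 1 else 0)"
      by (intro sum.cong) (auto simp: adj_def dest: sym)
    also have "\<dots> = (\<Sum>u\<in>{u\<in>V. E v u \<and> E w u}. 1)" using sum.inter_filter[OF finV, of "\<lambda>_. 1::real" "\<lambda>u. E v u \<and> E w u"] by simp
    also have "{u\<in>V. E v u \<and> E w u} = {u\<in>N. E w u}" by (auto simp: N_def)
    finally show ?thesis by (simp add: c_def)
  qed
  have key: "l * l = (\<Sum>w\<in>V. real (c w) * y w)"
  proof -
    have "l * l = l * (\<Sum>u\<in>V. adj E v u * y u)" using yeq[OF vV] yv by simp
    also have "\<dots> = (\<Sum>u\<in>V. adj E v u * (l * y u))"
      by (simp add: sum_distrib_left mult.commute mult.left_commute)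
    also have "\<dots> = (\<Sum>u\<in>V. adj E v u * (\<Sum>w\<in>V. adj E u w * y w))"
      using yeq by (intro sum.cong) auto
    also have "\<dots> = (\<Sum>u\<in>V. \<Sum>w\<in>V. adj E v u * adj E u w * y w)"
      by (simp add: sum_distrib_left mult.assoc)
    also have "\<dots> = (\<Sum>w\<in>V. \<Sum>u\<in>V. adj E v u * adj E u w * y w)" by (rule sum.swap)
    also have "\<dots> = (\<Sum>w\<in>V. (\<Sum>u\<in>V. adj E v u * adj E u w) * y w)"
      by (simp add: sum_distrib_right)
    also have "\<dots> = (\<Sum>w\<in>V. real (c w) * y w)" using cw by simp
    finally show ?thesis .
  qed
  have lsum: "l = (\<Sum>u\<in>N. y u)"
  proof -
    have "l = (\<Sum>u\<in>V. adj E v u * y u)" using yeq[OF vV] yv by simp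
    also have "\<dots> = (\<Sum>u\<in>V. if E v u then y u else 0)" by (intro sum.cong) (auto simp: adj_def)
    also have "\<dots> = (\<Sum>u\<in>N. y u)" using finV by (simp add: sum.inter_filter N_def)
    finally show ?thesis .
  qed
  have cv: "c v = card N" by (simp add: c_def N_def)
  have cN: "c u \<le> 1" if "u \<in> N" for u
  proof -
    have fz: "finite {z\<in>N. E u z}" using finN by simp
    have "\<forall>a1\<in>{z\<in>N. E u z}. \<forall>a2\<in>{z\<in>N. E u z}. a1 = a2"
      using that F1[OF G nc, of v u] by (auto simp: N_def)
    then have "card {z\<in>N. E u z} \<le> Suc 0" using card_le_Suc0_iff_eq[OF fz] by blast
    then show ?thesis by (simp add: c_def)
  qed
  define U where "U = {u\<in>N. c u = 0}"
  define M where "M = {u\<in>N. c u = 1}"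
  have NUM: "N = U \<union> M" using cN by (force simp: U_def M_def)
  have UM: "U \<inter> M = {}" by (auto simp: U_def M_def)
  have finU: "finite U" and finM: "finite M" using finN by (auto simp: U_def M_def)
  have cardN: "card N = card U + card M" using NUM UM finU finM by (simp add: card_Un_disjoint)
  have T1: "(\<Sum>u\<in>N. real (c u) * y u) = (\<Sum>u\<in>M. y u)"
  proof -
    have "(\<Sum>u\<in>N. real (c u) * y u) = (\<Sum>u\<in>U. real (c u) * y u) + (\<Sum>u\<in>M. real (c u) * y u)"
      using NUM UM finU finM by (simp add: sum.union_disjoint)
    also have "(\<Sum>u\<in>U. real (c u) * y u) = 0" by (simp add: U_def)
    also have "(\<Sum>u\<in>M. real (c u) * y u) = (\<Sum>u\<in>M. y u)" by (simp add: M_def)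
    finally show ?thesis by simp
  qed
  define S where "S = (\<Sum>w\<in>W. c w)"
  have T2: "(\<Sum>w\<in>W. real (c w) * y w) \<le> real S"
  proof -
    have "(\<Sum>w\<in>W. real (c w) * y w) \<le> (\<Sum>w\<in>W. real (c w))"
      using yle WV by (intro sum_mono) (auto simp: mult_left_le)
    then show ?thesis by (simp add: S_def)
  qed
  have TM: "(\<Sum>u\<in>M. y u) \<le> real (card M)"
  proof -
    have "(\<Sum>u\<in>M. y u) \<le> (\<Sum>u\<in>M. 1)" using yle NV NUM by (intro sum_mono) auto
    then show ?thesis by simp
  qed
  have main_eq: "l * l = real (card N) + (\<Sum>u\<in>M. y u) + (\<Sum>w\<in>W. real (c w) * y w)"
    using key sumsplit[of "\<lambda>w. real (c w) * y w"] cv yv T1 by simp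
  have ineq1: "2 * real n - 4 \<le> real (card N) + (\<Sum>u\<in>M. y u) + real S"
    using ll main_eq T2 by linarith
  have nbr: "l * y u = 1 + (\<Sum>w\<in>N. adj E u w * y w) + (\<Sum>w\<in>W. adj E u w * y w)" if "u \<in> N" for u
  proof -
    have "E u v" using that sym by (auto simp: N_def)
    then have "adj E u v = 1" by (simp add: adj_def)
    then show ?thesis using yeq[of u] that NV sumsplit[of "\<lambda>w. adj E u w * y w"] yv by auto
  qed
  have Esym: "E u w = E w u" for u w using sym by blast
  have cNu: "{w\<in>N. E u w} = {w\<in>N. E w u}" for u using sym by blast
  show False
  proof (cases "\<forall>w\<in>W. c w \<le> 1")
    case True
    have "S \<le> card W" unfolding S_def using sum_mono[of W c "\<lambda>_. 1"] True by simp
    then have UW: "card U + card W \<le> 2" using ineq1 TM ncard cardN by simp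
    have Uge: "(\<Sum>u\<in>U. y u) \<ge> 0"
    proof (cases "U = {}")
      case True then show ?thesis by simp
    next
      case False
      then have "card U \<ge> 1" using finU by (simp add: Suc_leI card_gt_0_iff)
      then have W1: "card W \<le> 1" using UW by simp
      show ?thesis
      proof (rule sum_nonneg)
        fix u assume uU: "u \<in> U"
        then have uN: "u \<in> N" by (simp add: U_def)
        have "(\<Sum>w\<in>N. adj E u w * y w) = 0"
          using uU finN by (intro adj_sum_zero) (auto simp: U_def c_def cNu)
        moreover have "(\<Sum>w\<in>W. adj E u w * y w) \<ge> - real (card {w\<in>W. E u w})"
          using finW yge WV by (intro adj_sum_ge) auto
        moreover have "card {w\<in>W. E u w} \<le> card W" using finW by (intro card_mono) auto
        ultimately have "l * y u \<ge> 0" using nbr[OF uN] W1 by linarith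
        then show "y u \<ge> 0" using l2 by (simp add: zero_le_mult_iff)
      qed
    qed
    have lsum2: "l = (\<Sum>u\<in>U. y u) + (\<Sum>u\<in>M. y u)"
      using lsum NUM UM finU finM by (simp add: sum.union_disjoint)
    have "(\<Sum>w\<in>W. real (c w) * y w) \<le> real (card W)" using T2 \<open>S \<le> card W\<close> by linarith
    then have "l * l - l \<le> real n - 1" using main_eq lsum2 Uge ncard by simp
    moreover have "(l - r) * (l + r - 1) \<ge> 0" using lr r2 by simp
    ultimately have "r * r - r \<le> real n - 1" by (simp add: algebra_simps)
    then have "r \<ge> real n - 3" using rr by simp
    then have "r * r \<ge> (real n - 3) * (real n - 3)" using n6 by (intro mult_mono) auto
    moreover have "(real n - 6) * (real n - 2) \<ge> 0" using n6 by simp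
    ultimately show False using rr by (simp add: algebra_simps)
  next
    case False
    then obtain w9 where w9: "w9 \<in> W" "\<not> c w9 \<le> 1" by auto
    then have "c w9 \<ge> 2" by simp
    then have ex2: "\<exists>w\<in>W. card {u\<in>N. E w u} \<ge> 2" using w9 by (auto simp: c_def)
    have F2h: "{u\<in>N. E w u} \<subseteq> U" if wW: "w \<in> W" and cw2: "card {u\<in>N. E w u} \<ge> 2" for w
    proof
      fix u1 assume u1: "u1 \<in> {u\<in>N. E w u}"
      have "card ({u\<in>N. E w u} - {u1}) \<ge> 1" using cw2 u1 finN by (simp add: card_Diff_singleton)
      then obtain u2 where "u2 \<in> {u\<in>N. E w u} - {u1}" by (metis card.empty ex_in_conv not_one_le_zero)
      then have u2: "u2 \<in> {u\<in>N. E w u}" "u2 \<noteq> u1" by auto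
      show "u1 \<in> U"
      proof (rule ccontr)
        assume "u1 \<notin> U"
        then have "c u1 \<noteq> 0" using u1 by (simp add: U_def)
        then obtain z where "z \<in> N" "E u1 z" using finN by (auto simp: c_def)
        then show False using F2[OF G nc, of w v u1 u2 z] wW u1 u2 by (auto simp: W_def N_def)
      qed
    qed
    have F3h: "{u\<in>N. E w u} \<inter> {u\<in>N. E w' u} = {}" if "w \<in> W" "w' \<in> W" "w \<noteq> w'"
      "card {u\<in>N. E w u} \<ge> 3" "card {u\<in>N. E w' u} \<ge> 2" for w w'
    proof (rule ccontr)
      assume "{u\<in>N. E w u} \<inter> {u\<in>N. E w' u} \<noteq> {}"
      then obtain u where u: "u \<in> N" "E w u" "E w' u" by auto
      have "card ({u\<in>N. E w' u} - {u}) \<ge> 1" using that(5) u finN by (simp add: card_Diff_singleton)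
      then obtain b where b: "b \<in> {u\<in>N. E w' u} - {u}" by (metis card.empty ex_in_conv not_one_le_zero)
      have "card ({u\<in>N. E w u} - {u, b}) \<ge> 1"
      proof -
        have "card ({u\<in>N. E w u} - {u, b}) \<ge> card {u\<in>N. E w u} - card {u, b}"
          by (rule diff_card_le_card_Diff) auto
        moreover have "card {u, b} \<le> 2" by (simp add: card_insert_le_m1)
        ultimately show ?thesis using that(4) by linarith
      qed
      then obtain a where a: "a \<in> {u\<in>N. E w u} - {u, b}" by (metis card.empty ex_in_conv not_one_le_zero)
      show False using F3[OF G nc, of w v w' u a b] that u a b by (auto simp: W_def N_def)
    qed
    note CLr = CL[of W U "\<lambda>w. {u\<in>N. E w u}", OF finW finU F2h F3h ex2]
    have CL1: "S + 2 + card {w\<in>W. c w \<le> 1} \<le> 2 * card W + card U"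
      using CLr(1) by (simp add: S_def c_def)
    have "real (card U) + 2 * real (card W) - 2 + (real (card M) - (\<Sum>u\<in>M. y u)) \<le> real S"
      using ineq1 ncard cardN by simp
    then have A1: "card U + 2 * card W \<le> S + 2" "real (card M) \<le> (\<Sum>u\<in>M. y u) + (real S + 2 - real (card U) - 2 * real (card W))"
      using TM by linarith+
    have "card {w\<in>W. c w \<le> 1} = 0" using CL1 A1(1) by linarith
    then have all2: "\<forall>w\<in>W. c w \<ge> 2" using finW by auto
    have Seq: "S + 2 = 2 * card W + card U" using CL1 A1(1) by linarith
    have TMeq: "real (card M) \<le> (\<Sum>u\<in>M. y u)" using A1(2) Seq by simp
    have Me: "M = {}"
    proof (rule ccontr)
      assume "M \<noteq> {}"
      then obtain u0 where u0: "u0 \<in> M" by auto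
      have ylt: "y u < 1" if uM: "u \<in> M" for u
      proof -
        have uN: "u \<in> N" using uM by (simp add: M_def)
        have noW: "\<not> E u w" if "w \<in> W" for w
        proof
          assume "E u w"
          then have "u \<in> {u\<in>N. E w u}" using uN sym by blast
          then have "u \<in> U" using F2h[OF that] all2 that by (auto simp: c_def)
          then show False using uM by (auto simp: U_def M_def)
        qed
        have "(\<Sum>w\<in>W. adj E u w * y w) = 0"
          using finW noW by (intro adj_sum_zero) auto
        moreover have "(\<Sum>w\<in>N. adj E u w * y w) \<le> real (card {w\<in>N. E u w})"
          using finN yle NV by (intro adj_sum_le) auto
        moreover have "card {w\<in>N. E u w} = 1" using uM by (simp add: M_def c_def cNu)
        ultimately have "l * y u \<le> 2" using nbr[OF uN] by linarith
        then have "y u \<le> 2 / l" using l2 by (simp add: field_simps)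
        also have "2 / l < 1" using l2 by simp
        finally show ?thesis .
      qed
      have "(\<Sum>u\<in>M. y u) < (\<Sum>u\<in>M. 1)"
        using finM u0 ylt by (intro sum_strict_mono_ex1) (auto intro: less_imp_le)
      then show False using TMeq by simp
    qed
    have NU: "N = U" using NUM Me by (metis sup_bot.right_neutral)
    have allNW: "\<forall>w\<in>W. {u\<in>N. E w u} = U"
    proof -
      have h1: "\<forall>w\<in>W. card {u\<in>N. E w u} \<ge> 2" using all2 by (simp add: c_def)
      have h2: "(\<Sum>w\<in>W. card {u\<in>N. E w u}) + 2 = 2 * card W + card U"
        using Seq by (simp add: S_def c_def)
      show ?thesis
        apply (rule CLr(2))
        apply (assumption | rule h1 h2)+
        done
    qed
    have Wadj: "E w u" if "w \<in> W" "u \<in> N" for w u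
    proof -
      have "{u\<in>N. E w u} = U" using allNW that(1) by blast
      then have "u \<in> {u\<in>N. E w u}" using that(2) NU by simp
      then show ?thesis by simp
    qed
    have Nind: "\<not> E u z" if "u \<in> N" "z \<in> N" for u z
    proof
      assume "E u z"
      have "u \<in> U" using that NU by simp
      then have "c u = 0" by (simp add: U_def)
      then have "{z\<in>N. E u z} = {}" using finN by (simp add: c_def)
      then show False using that \<open>E u z\<close> by auto
    qed
    obtain w0 where w0: "w0 \<in> W" using ex2 by auto
    have "graph_iso V E {0..<n} (K2_edges n)"
    proof (cases "card W = 1")
      case True
      then have We: "W = {w0}" using w0 by (metis card_1_singletonE singletonD)
      have w0v: "w0 \<noteq> v" "\<not> E v w0" "w0 \<notin> N" using w0 by (auto simp: W_def N_def)
      show ?thesis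
      proof (rule iso_K2[of V v w0 N])
        show "V = {v, w0} \<union> N" using Vsplit We by auto
        show "v \<noteq> w0" "v \<notin> N" "w0 \<notin> N" using w0v vN by auto
        show "finite N" by fact
        show "card N + 2 = n" using ncard True by simp
        fix a b assume ab: "a \<in> V" "b \<in> V"
        have p: "a = v \<or> a = w0 \<or> a \<in> N" and q: "b = v \<or> b = w0 \<or> b \<in> N"
          using ab Vsplit We by auto
        have e1: "E v u" "E u v" "E w0 u" "E u w0" if "u \<in> N" for u
          using that Wadj[OF w0 that] by (auto simp: N_def Esym)
        have e2: "\<not> E v w0" "\<not> E w0 v" using w0v by (auto simp: Esym)
        show "E a b \<longleftrightarrow> (a \<in> {v, w0} \<and> b \<in> N \<or> a \<in> N \<and> b \<in> {v, w0})"
          using p q e1 e2 Nind irr w0v vN by auto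
      qed
    next
      case False
      then have "card W \<ge> 2" using w0 finW by (metis One_nat_def Suc_1 Suc_leI card_gt_0_iff empty_iff le_neq_implies_less less_Suc_eq_le)
      then obtain w1 where w1: "w1 \<in> W" "w1 \<noteq> w0"
        by (metis card_le_Suc0_iff_eq finW not_less_eq_eq numeral_2_eq_2)
      have cardN2: "card N = 2"
      proof -
        have "c w0 \<ge> 2" using all2 w0 by simp
        then have "card N \<ge> 2" using allNW w0 NU by (simp add: c_def)
        moreover have "\<not> card N \<ge> 3"
        proof
          assume "card N \<ge> 3"
          then have "{u\<in>N. E w0 u} \<inter> {u\<in>N. E w1 u} = {}"
            using F3h[OF w0 w1(1) w1(2)[symmetric]] allNW w0 w1 NU by simp
          then show False using allNW w0 w1 NU \<open>card N \<ge> 3\<close> by auto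
        qed
        ultimately show ?thesis by simp
      qed
      then obtain a b where Nab: "N = {a, b}" "a \<noteq> b" by (meson card_2_iff)
      have abW: "a \<notin> W" "b \<notin> W" "a \<noteq> v" "b \<noteq> v" using Nab NW vN by auto
      show ?thesis
      proof (rule iso_K2[of V a b "insert v W"])
        show "V = {a, b} \<union> insert v W" using Vsplit Nab by auto
        show "a \<noteq> b" "a \<notin> insert v W" "b \<notin> insert v W" using Nab abW by auto
        show "finite (insert v W)" using finW by simp
        show "card (insert v W) + 2 = n" using ncard cardN2 vW finW by simp
        fix p q assume pq: "p \<in> V" "q \<in> V"
        have aN: "a \<in> N" "b \<in> N" using Nab by auto
        have Wind: "\<not> E p q" if "p \<in> W" "q \<in> W" for p q
        proof
          assume "E p q"
          moreover have "p \<noteq> q" using \<open>E p q\<close> irr by auto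
          ultimately show False
            using Windep[OF G nc, of p q a b] Wadj[OF that(1) aN(1)] Wadj[OF that(1) aN(2)]
              Wadj[OF that(2) aN(1)] Wadj[OF that(2) aN(2)] Nab(2) by blast
        qed
        have ea: "E a v" "E b v" "E v a" "E v b" using aN by (auto simp: N_def Esym)
        have ew: "E a w" "E b w" "E w a" "E w b" if "w \<in> W" for w using Wadj[OF that aN(1)] Wadj[OF that aN(2)] by (auto simp: Esym)
        have nab: "\<not> E a b" "\<not> E b a" using Nind aN by auto
        have nvw: "\<not> E v w" "\<not> E w v" if "w \<in> W" for w using that by (auto simp: W_def Esym)
        show "E p q \<longleftrightarrow> (p \<in> {a, b} \<and> q \<in> insert v W \<or> p \<in> insert v W \<and> q \<in> {a, b})"
        proof -
          have p: "p = a \<or> p = b \<or> p = v \<or> p \<in> W" and q: "q = a \<or> q = b \<or> q = v \<or> q \<in> W"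
            using pq Vsplit Nab by auto
          show ?thesis
            using p q ea ew nab nvw Wind irr abW Nab(2) vW by auto
        qed
      qed
    qed
    with niso show False by blast
  qed
qed


theorem theorem1p1:
  fixes V :: "'a set" and E :: "'a \<Rightarrow> 'a \<Rightarrow> bool" and n :: nat
  assumes "simple_graph V E"
    and "card V = n" and "n \<ge> 6"
    and "spectral_radius V E \<ge> spectral_radius {0..<n} (K2_edges n)"
    and "\<not> graph_iso V E {0..<n} (K2_edges n)"
  shows "has_chorded_cycle V E"
proof (rule ccontr)
  assume nc: "\<not> has_chorded_cycle V E"
  have finV: "finite V" using assms(1) unfolding simple_graph_def by blast
  have Vne: "V \<noteq> {}" using assms(2,3) by auto
  have finG: "finite {k. adj_eigenvalue V E k}" by (rule finite_adj_eig[OF finV])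
  have neG: "{k. adj_eigenvalue V E k} \<noteq> {}" using adj_eig_exists[OF assms(1) Vne] by auto
  have "spectral_radius V E \<in> {k. adj_eigenvalue V E k}"
    unfolding spectral_radius_def using finG neG by (rule Max_in)
  then have "spectral_radius V E < sqrt (2 * real n - 4)"
    using main_bound[OF assms(1,2,3) nc assms(5)] by simp
  moreover have "sqrt (2 * real n - 4) \<le> spectral_radius {0..<n} (K2_edges n)"
  proof -
    have "finite {k. adj_eigenvalue {0..<n} (K2_edges n) k}" by (rule finite_adj_eig) simp
    moreover have "sqrt (2 * real n - 4) \<in> {k. adj_eigenvalue {0..<n} (K2_edges n) k}"
      using K2_eig[of n] assms(3) by simp
    ultimately show ?thesis unfolding spectral_radius_def by (rule Max_ge)
  qed
  ultimately show False using assms(4) by simp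
qed

end
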